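(* (1) Let $(S,K,I)$ be an active split graph. Then $S$ is prime if and only if $\Phi(S)$ is connected. (2) Let $(S_1,K_1,I_1),\dots,(S_n,K_n,I_n)$ be pairwise vertex-disjoint prime split graphs and let $S=S_1\circ S_2\circ\cdots\circ S_n$, regarded as a split graph with bipartition $(K_1\cup\dots\cup K_n,\ I_1\cup\dots\cup I_n)$. Then $\Phi(S)=\Phi(S_1)\,\dot\cup\,\cdots\,\dot\cup\,\Phi(S_n)$ (disjoint union of multigraphs). (3) If $G$ is an active graph and $G=G_n\circ\cdots\circ G_1$ is its Tyshkevich decomposition into indecomposable factors each having at least one vertex (with $G_2,\dots,G_n$ split), then every factor $G_r$ is prime.
   Context: All graphs are finite and simple. A split graph is a graph $S$ whose vertex set is a disjoint union $V(S)=K\,\dot\cup\,I$ with $K$ a clique and $I$ an independent set; $(K,I)$ is called a bipartition of $S$, and $(S,K,I)$ denotes $S$ together with this fixed bipartition. A 2-switch in a graph $G$ is performed on four distinct vertices $a,b,c,d$ with $ab,cd\in E(G)$ and $ac,bd\notin E(G)$: it deletes $ab,cd$ and adds $ac,bd$; $a,b,c,d$ are said to participate in it. A vertex is active in $G$ if it participates in some 2-switch on $G$, otherwise inactive; $G$ is active if all its vertices are active. For a split graph $(S,K,I)$ and distinct $u,v\in I$, $\sigma_{uv}(S)$ is the number of induced subgraphs of $S$ isomorphic to $P_4$ containing both $u$ and $v$. The factor graph $\Phi(S)$ is the loopless multigraph with vertex set $I$ having exactly $\sigma_{uv}(S)$ parallel edges between $u$ and $v$. Graph notions (connected, complete, clique,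 etc.) applied to $\Phi(S)$ refer to its underlying simple graph, in which $u\sim v$ iff $\sigma_{uv}(S)\ge1$. Tyshkevich composition: for a split graph $(S,K,I)$ and a graph $G$ vertex-disjoint from $S$, $S\circ G$ is the graph with vertex set $V(S)\cup V(G)$ and edge set $E(S)\cup E(G)\cup\{xy: x\in K,\ y\in V(G)\}$ (a composition of a split graph with a split graph is split, with clique the union of the cliques and independent set the union of the independent sets). A graph $G$ is decomposable if $G=S\circ H$ for some split graph $S$ and graph $H$, each with at least one vertex; otherwise indecomposable. A graph is prime if it is active and indecomposable. Tyshkevich's theorem (known): every graph $G$ can be written as $G=G_n\circ\cdots\circ G_1$ with each $G_r$ indecomposable and $G_2,\dots,G_n$ split; with all $|G_r|\ge1$ this decomposition is unique up to isomorphism. *)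

theory Defs
  imports Main
begin

definition graph :: "'a set \<Rightarrow> 'a set set \<Rightarrow> bool" where
  "graph V E \<longleftrightarrow> finite V \<and> E \<subseteq> {{x, y} | x y. x \<in> V \<and> y \<in> V \<and> x \<noteq> y}"

definition split_graph :: "'a set \<Rightarrow> 'a set set \<Rightarrow> 'a set \<Rightarrow> 'a set \<Rightarrow> bool" where
  "split_graph V E K I \<longleftrightarrow> graph V E \<and> K \<inter> I = {} \<and> V = K \<union> I
     \<and> (\<forall>x\<in>K. \<forall>y\<in>K. x \<noteq> y \<longrightarrow> {x, y} \<in> E)
     \<and> (\<forall>x\<in>I. \<forall>y\<in>I. {x, y} \<notin> E)"

definition two_switch :: "'a set \<Rightarrow> 'a set set \<Rightarrow> 'a \<Rightarrow> 'a \<Rightarrow> 'a \<Rightarrow> 'a \<Rightarrow> bool" where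
  "two_switch V E a b c d \<longleftrightarrow> a \<in> V \<and> b \<in> V \<and> c \<in> V \<and> d \<in> V \<and> distinct [a, b, c, d]
     \<and> {a, b} \<in> E \<and> {c, d} \<in> E \<and> {a, c} \<notin> E \<and> {b, d} \<notin> E"

definition active_vertex :: "'a set \<Rightarrow> 'a set set \<Rightarrow> 'a \<Rightarrow> bool" where
  "active_vertex V E v \<longleftrightarrow> (\<exists>a b c d. two_switch V E a b c d \<and> v \<in> {a, b, c, d})"

definition active :: "'a set \<Rightarrow> 'a set set \<Rightarrow> bool" where
  "active V E \<longleftrightarrow> (\<forall>v\<in>V. active_vertex V E v)"

definition compose :: "'a set \<Rightarrow> 'a set set \<Rightarrow> 'a set \<Rightarrow> 'a set \<times> 'a set set \<Rightarrow> 'a set \<times> 'a set set" where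
  "compose VS ES K H = (VS \<union> fst H, ES \<union> snd H \<union> {{x, y} | x y. x \<in> K \<and> y \<in> fst H})"

definition decomposable :: "'a set \<Rightarrow> 'a set set \<Rightarrow> bool" where
  "decomposable V E \<longleftrightarrow> (\<exists>VS ES K I VH EH. split_graph VS ES K I \<and> graph VH EH
      \<and> VS \<noteq> {} \<and> VH \<noteq> {} \<and> VS \<inter> VH = {} \<and> (V, E) = compose VS ES K (VH, EH))"

definition prime_graph :: "'a set \<Rightarrow> 'a set set \<Rightarrow> bool" where
  "prime_graph V E \<longleftrightarrow> active V E \<and> \<not> decomposable V E"

definition induces_P4 :: "'a set set \<Rightarrow> 'a set \<Rightarrow> bool" where
  "induces_P4 E W \<longleftrightarrow> (\<exists>a b c d. distinct [a, b, c, d] \<and> W = {a, b, c, d}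
      \<and> {e \<in> E. e \<subseteq> W} = {{a, b}, {b, c}, {c, d}})"

definition sigma :: "'a set \<Rightarrow> 'a set set \<Rightarrow> 'a \<Rightarrow> 'a \<Rightarrow> nat" where
  "sigma V E u v = card {W. W \<subseteq> V \<and> u \<in> W \<and> v \<in> W \<and> induces_P4 E W}"

text \<open>Loopless multigraph: vertex set plus multiplicity function (zero outside / on the diagonal).
  The factor graph of (S,K,I), S = (K \<union> I, E).\<close>
definition factor_graph :: "'a set \<Rightarrow> 'a set \<Rightarrow> 'a set set \<Rightarrow> 'a set \<times> ('a \<Rightarrow> 'a \<Rightarrow> nat)" where
  "factor_graph K I E = (I, \<lambda>u v. if u \<in> I \<and> v \<in> I \<and> u \<noteq> v then sigma (K \<union> I) E u v else 0)"

definition mg_connected :: "'a set \<times> ('a \<Rightarrow> 'a \<Rightarrow> nat) \<Rightarrow> bool" where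
  "mg_connected M \<longleftrightarrow> (\<forall>u\<in>fst M. \<forall>v\<in>fst M.
      (u, v) \<in> {(x, y). x \<in> fst M \<and> y \<in> fst M \<and> snd M x y \<ge> 1}\<^sup>*)"

fun comp_up :: "(nat \<Rightarrow> 'a set) \<Rightarrow> (nat \<Rightarrow> 'a set set) \<Rightarrow> (nat \<Rightarrow> 'a set) \<Rightarrow> nat \<Rightarrow> nat
    \<Rightarrow> 'a set \<times> 'a set set" where
  "comp_up Vs Es Ks i 0 = ({}, {})"
| "comp_up Vs Es Ks i (Suc k) = compose (Vs i) (Es i) (Ks i) (comp_up Vs Es Ks (Suc i) k)"

text \<open>G_n o G_(n-1) o ... o G_1 (right-nested; G_1 composed with the empty graph is G_1).\<close>
fun comp_down :: "(nat \<Rightarrow> 'a set) \<Rightarrow> (nat \<Rightarrow> 'a set set) \<Rightarrow> (nat \<Rightarrow> 'a set) \<Rightarrow> nat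
    \<Rightarrow> 'a set \<times> 'a set set" where
  "comp_down Vs Es Ks 0 = ({}, {})"
| "comp_down Vs Es Ks (Suc k) = compose (Vs (Suc k)) (Es (Suc k)) (Ks (Suc k)) (comp_down Vs Es Ks k)"

end

theory Submission
  imports Defs
begin


lemma graph_edge: "graph V E \<Longrightarrow> e \<in> E \<Longrightarrow> \<exists>x y. e = {x, y} \<and> x \<in> V \<and> y \<in> V \<and> x \<noteq> y"
  unfolding graph_def by blast

lemma graph_edge_sub: "graph V E \<Longrightarrow> {x, y} \<in> E \<Longrightarrow> x \<in> V \<and> y \<in> V \<and> x \<noteq> y"
  unfolding graph_def by (auto simp: doubleton_eq_iff)

lemma compose_graph:
  assumes "graph VS ES" "graph VH EH" "K \<subseteq> VS" "VS \<inter> VH = {}"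
  shows "graph (fst (compose VS ES K (VH, EH))) (snd (compose VS ES K (VH, EH)))"
proof -
  have "e \<in> {{x, y} | x y. x \<in> VS \<union> VH \<and> y \<in> VS \<union> VH \<and> x \<noteq> y}"
    if "e \<in> ES \<union> EH \<union> {{x, y} | x y. x \<in> K \<and> y \<in> VH}" for e
  proof -
    from that consider "e \<in> ES" | "e \<in> EH" | "e \<in> {{x, y} | x y. x \<in> K \<and> y \<in> VH}" by blast
    then show ?thesis
    proof cases
      case 1 then show ?thesis using graph_edge[OF assms(1)] by blast
    next
      case 2 then show ?thesis using graph_edge[OF assms(2)] by blast
    next
      case 3 then show ?thesis using assms(3,4) by blast
    qed
  qed
  then have "ES \<union> EH \<union> {{x, y} | x y. x \<in> K \<and> y \<in> VH} \<subseteq> {{x, y} | x y. x \<in> VS \<union> VH \<and> y \<in> VS \<union> VH \<and> x \<noteq> y}"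
    by blast
  then show ?thesis using assms unfolding graph_def compose_def by simp
qed

locale comp_setting =
  fixes VS ES K I VH EH
  assumes sp: "split_graph VS ES K I" and gh: "graph VH EH" and dj: "VS \<inter> VH = {}"
begin

definition "V = fst (compose VS ES K (VH, EH))"
definition "E = snd (compose VS ES K (VH, EH))"

lemma V_eq: "V = VS \<union> VH" by (simp add: V_def compose_def)
lemma E_eq: "E = ES \<union> EH \<union> {{x, y} | x y. x \<in> K \<and> y \<in> VH}" by (simp add: E_def compose_def)

lemma gs: "graph VS ES" using sp unfolding split_graph_def by blast
lemma KS: "K \<subseteq> VS" "I \<subseteq> VS" "VS = K \<union> I" "K \<inter> I = {}" using sp by (auto simp: split_graph_def)
lemma clique: "x \<in> K \<Longrightarrow> y \<in> K \<Longrightarrow> x \<noteq> y \<Longrightarrow> {x, y} \<in> ES" using sp by (simp add: split_graph_def)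
lemma indep: "x \<in> I \<Longrightarrow> y \<in> I \<Longrightarrow> {x, y} \<notin> ES" using sp by (simp add: split_graph_def)

lemma cross_iff: "x \<in> VS \<Longrightarrow> y \<in> VH \<Longrightarrow> ({x, y} \<in> E \<longleftrightarrow> x \<in> K)"
proof -
  assume x: "x \<in> VS" and y: "y \<in> VH"
  have "{x, y} \<notin> ES" using graph_edge_sub[OF gs, of x y] y dj by auto
  moreover have "{x, y} \<notin> EH" using graph_edge_sub[OF gh, of x y] x dj by auto
  moreover have "{x, y} \<in> {{x, y} | x y. x \<in> K \<and> y \<in> VH} \<longleftrightarrow> x \<in> K"
    using x y dj KS by (auto simp: doubleton_eq_iff)
  ultimately show ?thesis by (simp add: E_eq)
qed

lemma restr_S: "W \<subseteq> VS \<Longrightarrow> {e \<in> E. e \<subseteq> W} = {e \<in> ES. e \<subseteq> W}"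
proof -
  assume W: "W \<subseteq> VS"
  have "e \<notin> EH" if "e \<subseteq> W" for e
  proof
    assume "e \<in> EH"
    then obtain x y where "e = {x, y}" "x \<in> VH" using graph_edge[OF gh] by blast
    then show False using that W dj by auto
  qed
  moreover have "e \<notin> {{x, y} | x y. x \<in> K \<and> y \<in> VH}" if "e \<subseteq> W" for e
    using that W dj by auto
  ultimately show ?thesis by (auto simp: E_eq)
qed

lemma restr_H: "W \<subseteq> VH \<Longrightarrow> {e \<in> E. e \<subseteq> W} = {e \<in> EH. e \<subseteq> W}"
proof -
  assume W: "W \<subseteq> VH"
  have "e \<notin> ES" if "e \<subseteq> W" for e
  proof
    assume "e \<in> ES"
    then obtain x y where "e = {x, y}" "x \<in> VS" using graph_edge[OF gs] by blast
    then show False using that W dj by auto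
  qed
  moreover have "e \<notin> {{x, y} | x y. x \<in> K \<and> y \<in> VH}" if "e \<subseteq> W" for e
    using that W dj KS by auto
  ultimately show ?thesis by (auto simp: E_eq)
qed

lemma within_S: "x \<in> VS \<Longrightarrow> y \<in> VS \<Longrightarrow> ({x, y} \<in> E \<longleftrightarrow> {x, y} \<in> ES)"
  using restr_S[of "{x, y}"] by blast

lemma within_H: "x \<in> VH \<Longrightarrow> y \<in> VH \<Longrightarrow> ({x, y} \<in> E \<longleftrightarrow> {x, y} \<in> EH)"
  using restr_H[of "{x, y}"] by blast

lemma F1: "x \<in> K \<Longrightarrow> y \<in> V \<Longrightarrow> x \<noteq> y \<Longrightarrow> {x, y} \<notin> E \<Longrightarrow> y \<in> I"
proof -
  assume a: "x \<in> K" "y \<in> V" "x \<noteq> y" "{x, y} \<notin> E"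
  show "y \<in> I"
  proof (cases "y \<in> VH")
    case True then show ?thesis using cross_iff[of x y] a KS by auto
  next
    case False
    then have "y \<in> VS" using a V_eq by auto
    then show ?thesis using a within_S[of x y] clique[of x y] KS by auto
  qed
qed

lemma F2: "x \<in> I \<Longrightarrow> y \<in> V \<Longrightarrow> {x, y} \<in> E \<Longrightarrow> y \<in> K"
proof -
  assume a: "x \<in> I" "y \<in> V" "{x, y} \<in> E"
  show "y \<in> K"
  proof (cases "y \<in> VH")
    case True then show ?thesis using cross_iff[of x y] a KS by auto
  next
    case False
    then have "y \<in> VS" using a V_eq by auto
    then show ?thesis using a within_S[of x y] indep[of x y] KS by auto
  qed
qed

lemma chase: "two_switch V E a b c d \<Longrightarrow> a \<in> VS \<Longrightarrow> a \<in> VS \<and> b \<in> VS \<and> c \<in> VS \<and> d \<in> VS"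
proof -
  assume sw: "two_switch V E a b c d" and a: "a \<in> VS"
  have e: "{a, b} \<in> E" "{c, d} \<in> E" "{a, c} \<notin> E" "{b, d} \<notin> E" "a \<in> V" "b \<in> V" "c \<in> V" "d \<in> V"
    "a \<noteq> b" "a \<noteq> c" "a \<noteq> d" "b \<noteq> c" "b \<noteq> d" "c \<noteq> d"
    using sw by (auto simp: two_switch_def)
  have e': "{b, a} \<in> E" "{d, c} \<in> E" "{c, a} \<notin> E" "{d, b} \<notin> E"
    using e by (auto simp: insert_commute)
  show ?thesis
  proof (cases "a \<in> K")
    case True
    then have "c \<in> I" using F1 e by blast
    then have "d \<in> K" using F2 e by blast
    then have "b \<in> I" using F1 e e' by blast
    then show ?thesis using \<open>c \<in> I\<close> \<open>d \<in> K\<close> a KS by auto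
  next
    case False
    then have "a \<in> I" using a KS by auto
    then have "b \<in> K" using F2 e by blast
    then have "d \<in> I" using F1 e by blast
    then have "c \<in> K" using F2 e e' by blast
    then show ?thesis using \<open>b \<in> K\<close> \<open>d \<in> I\<close> a KS by auto
  qed
qed

lemma two_switch_perm: "two_switch V' E' a b c d \<Longrightarrow> two_switch V' E' b a d c"
  "two_switch V' E' a b c d \<Longrightarrow> two_switch V' E' c d a b"
  by (auto simp: two_switch_def insert_commute)

lemma switch_iff: "two_switch V E a b c d \<longleftrightarrow> two_switch VS ES a b c d \<or> two_switch VH EH a b c d"
proof
  assume sw: "two_switch V E a b c d"
  have abcd: "a \<in> V" "b \<in> V" "c \<in> V" "d \<in> V" using sw by (auto simp: two_switch_def)
  show "two_switch VS ES a b c d \<or> two_switch VH EH a b c d"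
  proof (cases "a \<in> VS \<or> b \<in> VS \<or> c \<in> VS \<or> d \<in> VS")
    case True
    have "a \<in> VS \<and> b \<in> VS \<and> c \<in> VS \<and> d \<in> VS"
      using True chase[OF sw] chase[OF two_switch_perm(1)[OF sw]]
        chase[OF two_switch_perm(2)[OF sw]] chase[OF two_switch_perm(1)[OF two_switch_perm(2)[OF sw]]]
      by blast
    then have "two_switch VS ES a b c d" using sw within_S unfolding two_switch_def by metis
    then show ?thesis ..
  next
    case False
    then have "a \<in> VH \<and> b \<in> VH \<and> c \<in> VH \<and> d \<in> VH" using abcd V_eq by auto
    then have "two_switch VH EH a b c d" using sw within_H unfolding two_switch_def by metis
    then show ?thesis ..
  qed
next
  assume "two_switch VS ES a b c d \<or> two_switch VH EH a b c d"
  then show "two_switch V E a b c d"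
  proof
    assume sw: "two_switch VS ES a b c d"
    then show ?thesis using within_S V_eq unfolding two_switch_def by (metis UnI1)
  next
    assume sw: "two_switch VH EH a b c d"
    then show ?thesis using within_H V_eq unfolding two_switch_def by (metis UnI2)
  qed
qed

end



definition P4s :: "'a set \<Rightarrow> 'a set set \<Rightarrow> 'a \<Rightarrow> 'a \<Rightarrow> 'a set set" where
  "P4s V E u v = {W. W \<subseteq> V \<and> u \<in> W \<and> v \<in> W \<and> induces_P4 E W}"

lemma sigma_P4s: "sigma V E u v = card (P4s V E u v)"
  by (simp add: sigma_def P4s_def)

lemma induces_P4_cong: "{e \<in> E. e \<subseteq> W} = {e \<in> E'. e \<subseteq> W} \<Longrightarrow> induces_P4 E W = induces_P4 E' W"
  by (simp add: induces_P4_def)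

lemma P4_switch:
  assumes "W \<subseteq> V'" "induces_P4 E' W"
  shows "\<exists>a b c d. W = {a, b, c, d} \<and> two_switch V' E' a b c d"
proof -
  obtain a b c d where d: "distinct [a, b, c, d]" "W = {a, b, c, d}"
    and r: "{e \<in> E'. e \<subseteq> W} = {{a, b}, {b, c}, {c, d}}"
    using assms(2) unfolding induces_P4_def by blast
  have "{a, b} \<in> {e \<in> E'. e \<subseteq> W}" "{c, d} \<in> {e \<in> E'. e \<subseteq> W}" unfolding r by simp_all
  then have 1: "{a, b} \<in> E'" "{c, d} \<in> E'" by simp_all
  have n: "{a, c} \<notin> {{a, b}, {b, c}, {c, d}}" "{b, d} \<notin> {{a, b}, {b, c}, {c, d}}"
    using d(1) by (auto simp add: doubleton_eq_iff)
  have "{a, c} \<subseteq> W" "{b, d} \<subseteq> W" using d(2) by auto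
  then have 2: "{a, c} \<notin> E'" "{b, d} \<notin> E'" using n unfolding r[symmetric] by simp_all
  have "two_switch V' E' a b c d" unfolding two_switch_def using 1 2 d assms(1) by simp
  then show ?thesis using d(2) by blast
qed

context comp_setting begin

lemma P4s_iff: "P4s V E u v = P4s VS ES u v \<union> P4s VH EH u v"
proof
  show "P4s V E u v \<subseteq> P4s VS ES u v \<union> P4s VH EH u v"
  proof
    fix W assume W: "W \<in> P4s V E u v"
    then have WV: "W \<subseteq> V" "induces_P4 E W" "u \<in> W" "v \<in> W" by (auto simp: P4s_def)
    obtain a b c d where abcd: "W = {a, b, c, d}" "two_switch V E a b c d"
      using P4_switch[OF WV(1,2)] by blast
    then consider "two_switch VS ES a b c d" | "two_switch VH EH a b c d" using switch_iff by blast
    then show "W \<in> P4s VS ES u v \<union> P4s VH EH u v"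
    proof cases
      case 1
      then have "W \<subseteq> VS" using abcd by (auto simp: two_switch_def)
      then show ?thesis using restr_S[of W] induces_P4_cong[of E W ES] WV by (auto simp: P4s_def)
    next
      case 2
      then have "W \<subseteq> VH" using abcd by (auto simp: two_switch_def)
      then show ?thesis using restr_H[of W] induces_P4_cong[of E W EH] WV by (auto simp: P4s_def)
    qed
  qed
next
  show "P4s VS ES u v \<union> P4s VH EH u v \<subseteq> P4s V E u v"
  proof
    fix W assume "W \<in> P4s VS ES u v \<union> P4s VH EH u v"
    then show "W \<in> P4s V E u v"
    proof
      assume W: "W \<in> P4s VS ES u v"
      then have "W \<subseteq> VS" by (simp add: P4s_def)
      then show ?thesis using W restr_S[of W] induces_P4_cong[of E W ES] V_eq by (auto simp: P4s_def)
    next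
      assume W: "W \<in> P4s VH EH u v"
      then have "W \<subseteq> VH" by (simp add: P4s_def)
      then show ?thesis using W restr_H[of W] induces_P4_cong[of E W EH] V_eq by (auto simp: P4s_def)
    qed
  qed
qed

end

lemma comp_down_base: "comp_down Vs Es Ks (Suc 0) = (Vs (Suc 0), Es (Suc 0))"
  by (simp add: compose_def)

lemma comp_down_props:
  assumes "\<forall>r\<in>{1..k}. graph (Vs r) (Es r)"
    "\<forall>r\<in>{2..k}. split_graph (Vs r) (Es r) (Ks r) (Is r)"
    "\<forall>r\<in>{1..k}. \<forall>s\<in>{1..k}. r \<noteq> s \<longrightarrow> Vs r \<inter> Vs s = {}"
  shows "fst (comp_down Vs Es Ks k) = (\<Union>r\<in>{1..k}. Vs r)
    \<and> graph (fst (comp_down Vs Es Ks k)) (snd (comp_down Vs Es Ks k))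
    \<and> (\<forall>a b c d. two_switch (fst (comp_down Vs Es Ks k)) (snd (comp_down Vs Es Ks k)) a b c d
         \<longrightarrow> (\<exists>r\<in>{1..k}. two_switch (Vs r) (Es r) a b c d))"
  using assms
proof (induction k)
  case 0
  then show ?case by (simp add: graph_def two_switch_def)
next
  case (Suc k)
  show ?case
  proof (cases "k = 0")
    case True
    then show ?thesis using Suc.prems by (auto simp: compose_def)
  next
    case False
    have IH: "fst (comp_down Vs Es Ks k) = (\<Union>r\<in>{1..k}. Vs r)
      \<and> graph (fst (comp_down Vs Es Ks k)) (snd (comp_down Vs Es Ks k))
      \<and> (\<forall>a b c d. two_switch (fst (comp_down Vs Es Ks k)) (snd (comp_down Vs Es Ks k)) a b c d
         \<longrightarrow> (\<exists>r\<in>{1..k}. two_switch (Vs r) (Es r) a b c d))"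
    proof (rule Suc.IH)
      show "\<forall>r\<in>{1..k}. graph (Vs r) (Es r)" using Suc.prems(1) by simp
      show "\<forall>r\<in>{2..k}. split_graph (Vs r) (Es r) (Ks r) (Is r)" using Suc.prems(2) by simp
      show "\<forall>r\<in>{1..k}. \<forall>s\<in>{1..k}. r \<noteq> s \<longrightarrow> Vs r \<inter> Vs s = {}" using Suc.prems(3) by simp
    qed
    obtain VH EH where H: "comp_down Vs Es Ks k = (VH, EH)" by (cases "comp_down Vs Es Ks k") auto
    have sp: "split_graph (Vs (Suc k)) (Es (Suc k)) (Ks (Suc k)) (Is (Suc k))" using Suc.prems(2) False by simp
    have VH: "VH = (\<Union>r\<in>{1..k}. Vs r)" using IH H by simp
    have "Vs (Suc k) \<inter> Vs r = {}" if "r \<in> {1..k}" for r using Suc.prems(3) that by simp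
    then have dj: "Vs (Suc k) \<inter> VH = {}" unfolding VH by blast
    have gH: "graph VH EH" using conjunct1[OF conjunct2[OF IH]] H by simp
    interpret cs: comp_setting "Vs (Suc k)" "Es (Suc k)" "Ks (Suc k)" "Is (Suc k)" VH EH
      using sp gH dj by unfold_locales
    have eq: "comp_down Vs Es Ks (Suc k) = (cs.V, cs.E)" using H by (simp add: cs.V_def cs.E_def)
    have "{1..Suc k} = insert (Suc k) {1..k}" by auto
    then have fst: "fst (comp_down Vs Es Ks (Suc k)) = (\<Union>r\<in>{1..Suc k}. Vs r)"
      using eq cs.V_eq VH by simp
    have gr: "graph cs.V cs.E" unfolding cs.V_def cs.E_def
      using compose_graph[of "Vs (Suc k)" "Es (Suc k)" VH EH "Ks (Suc k)"] cs.gs gH cs.KS(1) dj by blast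
    have sw: "\<forall>a b c d. two_switch VH EH a b c d \<longrightarrow> (\<exists>r\<in>{1..k}. two_switch (Vs r) (Es r) a b c d)"
      using IH H by simp
    have "\<exists>r\<in>{1..Suc k}. two_switch (Vs r) (Es r) a b c d" if "two_switch cs.V cs.E a b c d" for a b c d
    proof -
      from that consider "two_switch (Vs (Suc k)) (Es (Suc k)) a b c d" | "two_switch VH EH a b c d"
        using cs.switch_iff by blast
      then show ?thesis
      proof cases
        case 1 then show ?thesis by auto
      next
        case 2 then obtain r where "r \<in> {1..k}" "two_switch (Vs r) (Es r) a b c d" using sw by blast
        then show ?thesis by (intro bexI[of _ r]) auto
      qed
    qed
    then show ?thesis using eq fst gr by simp
  qed
qed

lemma comp_up_props:
  assumes "\<forall>j\<in>{i..<i+k}. split_graph (Vs j) (Es j) (Ks j) (Is j)"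
    "\<forall>r\<in>{i..<i+k}. \<forall>s\<in>{i..<i+k}. r \<noteq> s \<longrightarrow> Vs r \<inter> Vs s = {}"
  shows "fst (comp_up Vs Es Ks i k) = (\<Union>r\<in>{i..<i+k}. Vs r)
    \<and> graph (fst (comp_up Vs Es Ks i k)) (snd (comp_up Vs Es Ks i k))
    \<and> (\<forall>u v. P4s (fst (comp_up Vs Es Ks i k)) (snd (comp_up Vs Es Ks i k)) u v
          = (\<Union>r\<in>{i..<i+k}. P4s (Vs r) (Es r) u v))"
  using assms
proof (induction k arbitrary: i)
  case 0
  then show ?case by (simp add: graph_def P4s_def)
next
  case (Suc k)
  have sub: "{Suc i..<Suc i + k} \<subseteq> {i..<i + Suc k}" by auto
  have IH: "fst (comp_up Vs Es Ks (Suc i) k) = (\<Union>r\<in>{Suc i..<Suc i+k}. Vs r)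
    \<and> graph (fst (comp_up Vs Es Ks (Suc i) k)) (snd (comp_up Vs Es Ks (Suc i) k))
    \<and> (\<forall>u v. P4s (fst (comp_up Vs Es Ks (Suc i) k)) (snd (comp_up Vs Es Ks (Suc i) k)) u v
          = (\<Union>r\<in>{Suc i..<Suc i+k}. P4s (Vs r) (Es r) u v))"
  proof (rule Suc.IH)
    show "\<forall>j\<in>{Suc i..<Suc i+k}. split_graph (Vs j) (Es j) (Ks j) (Is j)" using Suc.prems(1) sub by blast
    show "\<forall>r\<in>{Suc i..<Suc i+k}. \<forall>s\<in>{Suc i..<Suc i+k}. r \<noteq> s \<longrightarrow> Vs r \<inter> Vs s = {}"
      using Suc.prems(2) sub by blast
  qed
  obtain VH EH where H: "comp_up Vs Es Ks (Suc i) k = (VH, EH)" by (cases "comp_up Vs Es Ks (Suc i) k") auto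
  have sp: "split_graph (Vs i) (Es i) (Ks i) (Is i)" using Suc.prems(1) by simp
  have VH: "VH = (\<Union>r\<in>{Suc i..<Suc i+k}. Vs r)" using IH H by simp
  have "Vs i \<inter> Vs r = {}" if "r \<in> {Suc i..<Suc i+k}" for r using Suc.prems(2) that by simp
  then have dj: "Vs i \<inter> VH = {}" unfolding VH by blast
  have gH: "graph VH EH" using conjunct1[OF conjunct2[OF IH]] H by simp
  interpret cs: comp_setting "Vs i" "Es i" "Ks i" "Is i" VH EH
    using sp gH dj by unfold_locales
  have eq: "comp_up Vs Es Ks i (Suc k) = (cs.V, cs.E)" using H by (simp add: cs.V_def cs.E_def)
  have ins: "{i..<i + Suc k} = insert i {Suc i..<Suc i + k}" by auto
  then have fst: "fst (comp_up Vs Es Ks i (Suc k)) = (\<Union>r\<in>{i..<i + Suc k}. Vs r)"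
    using eq cs.V_eq VH by simp
  have gr: "graph cs.V cs.E" unfolding cs.V_def cs.E_def
    using compose_graph[of "Vs i" "Es i" VH EH "Ks i"] cs.gs gH cs.KS(1) dj by blast
  have "P4s cs.V cs.E u v = (\<Union>r\<in>{i..<i + Suc k}. P4s (Vs r) (Es r) u v)" for u v
  proof -
    have "P4s VH EH u v = (\<Union>r\<in>{Suc i..<Suc i+k}. P4s (Vs r) (Es r) u v)"
      using conjunct2[OF conjunct2[OF IH]] H by simp
    then show ?thesis using cs.P4s_iff[of u v] ins by simp
  qed
  then show ?case using eq fst gr by simp
qed



lemma sum_single: "finite A \<Longrightarrow> j \<in> A \<Longrightarrow> (\<And>i. i \<in> A \<Longrightarrow> i \<noteq> j \<Longrightarrow> g i = (0::nat)) \<Longrightarrow> sum g A = g j"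
  by (simp add: sum.remove)

theorem part3:
  "\<forall>(V :: 'a set) E (n :: nat) Vs Es Ks Is.
            graph V E \<and> active V E \<and> n \<ge> 1
            \<and> (\<forall>r\<in>{1..n}. graph (Vs r) (Es r) \<and> Vs r \<noteq> {} \<and> \<not> decomposable (Vs r) (Es r))
            \<and> (\<forall>r\<in>{2..n}. split_graph (Vs r) (Es r) (Ks r) (Is r))
            \<and> (\<forall>r\<in>{1..n}. \<forall>s\<in>{1..n}. r \<noteq> s \<longrightarrow> Vs r \<inter> Vs s = {})
            \<and> (V, E) = comp_down Vs Es Ks n
            \<longrightarrow> (\<forall>r\<in>{1..n}. prime_graph (Vs r) (Es r))"
proof (intro allI impI)
  fix V :: "'a set" and E n Vs Es Ks Is
  assume a: "graph V E \<and> active V E \<and> n \<ge> 1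
            \<and> (\<forall>r\<in>{1..n}. graph (Vs r) (Es r) \<and> Vs r \<noteq> {} \<and> \<not> decomposable (Vs r) (Es r))
            \<and> (\<forall>r\<in>{2..n}. split_graph (Vs r) (Es r) (Ks r) (Is r))
            \<and> (\<forall>r\<in>{1..n}. \<forall>s\<in>{1..n}. r \<noteq> s \<longrightarrow> Vs r \<inter> Vs s = {})
            \<and> (V, E) = comp_down Vs Es Ks n"
  have p: "fst (comp_down Vs Es Ks n) = (\<Union>r\<in>{1..n}. Vs r)
    \<and> graph (fst (comp_down Vs Es Ks n)) (snd (comp_down Vs Es Ks n))
    \<and> (\<forall>a b c d. two_switch (fst (comp_down Vs Es Ks n)) (snd (comp_down Vs Es Ks n)) a b c d
         \<longrightarrow> (\<exists>r\<in>{1..n}. two_switch (Vs r) (Es r) a b c d))"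
    by (rule comp_down_props) (use a in auto)
  have VE: "V = fst (comp_down Vs Es Ks n)" "E = snd (comp_down Vs Es Ks n)" using a
    by (metis fst_conv, metis snd_conv)
  have Vu: "V = (\<Union>r\<in>{1..n}. Vs r)" using p VE by simp
  have sw: "\<And>a b c d. two_switch V E a b c d \<Longrightarrow> \<exists>r\<in>{1..n}. two_switch (Vs r) (Es r) a b c d"
    using p VE by simp
  have act: "active V E" using a by simp
  have dj: "\<forall>r\<in>{1..n}. \<forall>s\<in>{1..n}. r \<noteq> s \<longrightarrow> Vs r \<inter> Vs s = {}" using a by simp
  show "\<forall>r\<in>{1..n}. prime_graph (Vs r) (Es r)"
  proof
    fix r assume r: "r \<in> {1..n}"
    have "active_vertex (Vs r) (Es r) v" if v: "v \<in> Vs r" for v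
    proof -
      have "v \<in> V" using v r Vu by auto
      then obtain a b c d where s: "two_switch V E a b c d" "v \<in> {a, b, c, d}"
        using act unfolding active_def active_vertex_def by blast
      then obtain r' where r': "r' \<in> {1..n}" "two_switch (Vs r') (Es r') a b c d" using sw by blast
      then have "v \<in> Vs r'" using s(2) by (auto simp: two_switch_def)
      then have "r' = r" using dj r r' v by blast
      then show ?thesis using r' s(2) unfolding active_vertex_def by blast
    qed
    then show "prime_graph (Vs r) (Es r)" using a r unfolding prime_graph_def active_def by auto
  qed
qed

theorem part2:
  "\<forall>(n :: nat) (Vs :: nat \<Rightarrow> 'a set) Es Ks Is.
            (\<forall>i\<in>{1..n}. split_graph (Vs i) (Es i) (Ks i) (Is i) \<and> prime_graph (Vs i) (Es i))
            \<and> (\<forall>i\<in>{1..n}. \<forall>j\<in>{1..n}. i \<noteq> j \<longrightarrow> Vs i \<inter> Vs j = {})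
            \<longrightarrow> factor_graph (\<Union>i\<in>{1..n}. Ks i) (\<Union>i\<in>{1..n}. Is i) (snd (comp_up Vs Es Ks 1 n))
                = (\<Union>i\<in>{1..n}. Is i,
                   \<lambda>u v. \<Sum>i\<in>{1..n}. snd (factor_graph (Ks i) (Is i) (Es i)) u v)"
proof (intro allI impI)
  fix n and Vs :: "nat \<Rightarrow> 'a set" and Es Ks Is
  assume a: "(\<forall>i\<in>{1..n}. split_graph (Vs i) (Es i) (Ks i) (Is i) \<and> prime_graph (Vs i) (Es i))
            \<and> (\<forall>i\<in>{1..n}. \<forall>j\<in>{1..n}. i \<noteq> j \<longrightarrow> Vs i \<inter> Vs j = {})"
  have ivl: "{1..<1+n} = {1..n}" by auto
  have sp: "\<And>i. i \<in> {1..n} \<Longrightarrow> split_graph (Vs i) (Es i) (Ks i) (Is i)" using a by simp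
  have dj: "\<And>i j. i \<in> {1..n} \<Longrightarrow> j \<in> {1..n} \<Longrightarrow> i \<noteq> j \<Longrightarrow> Vs i \<inter> Vs j = {}" using a by simp
  have KI: "\<And>i. i \<in> {1..n} \<Longrightarrow> Vs i = Ks i \<union> Is i" using sp by (simp add: split_graph_def)
  have p: "fst (comp_up Vs Es Ks 1 n) = (\<Union>r\<in>{1..<1+n}. Vs r)
    \<and> graph (fst (comp_up Vs Es Ks 1 n)) (snd (comp_up Vs Es Ks 1 n))
    \<and> (\<forall>u v. P4s (fst (comp_up Vs Es Ks 1 n)) (snd (comp_up Vs Es Ks 1 n)) u v
          = (\<Union>r\<in>{1..<1+n}. P4s (Vs r) (Es r) u v))"
    by (rule comp_up_props[where Is=Is]) (use sp dj in \<open>auto simp: ivl\<close>)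
  define VV where "VV = fst (comp_up Vs Es Ks 1 n)"
  define EE where "EE = snd (comp_up Vs Es Ks 1 n)"
  have VVe: "VV = (\<Union>r\<in>{1..n}. Vs r)" using p ivl VV_def by simp
  have P4e: "\<And>u v. P4s VV EE u v = (\<Union>r\<in>{1..n}. P4s (Vs r) (Es r) u v)"
    using conjunct2[OF conjunct2[OF p]] ivl unfolding VV_def EE_def by simp
  have KIu: "(\<Union>i\<in>{1..n}. Ks i) \<union> (\<Union>i\<in>{1..n}. Is i) = VV" using VVe KI by auto
  define I where "I = (\<Union>i\<in>{1..n}. Is i)"
  have key: "(if u \<in> I \<and> v \<in> I \<and> u \<noteq> v then sigma VV EE u v else 0)
     = (\<Sum>i\<in>{1..n}. if u \<in> Is i \<and> v \<in> Is i \<and> u \<noteq> v then sigma (Ks i \<union> Is i) (Es i) u v else 0)" for u v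
  proof (cases "u \<in> I \<and> v \<in> I \<and> u \<noteq> v")
    case True
    note uv = True
    then obtain j where j: "j \<in> {1..n}" "u \<in> Is j" unfolding I_def by blast
    have uVs: "u \<notin> Vs i" if "i \<in> {1..n}" "i \<noteq> j" for i
      using dj[OF that(1) j(1) that(2)] j KI by blast
    have "(\<Sum>i\<in>{1..n}. if u \<in> Is i \<and> v \<in> Is i \<and> u \<noteq> v then sigma (Ks i \<union> Is i) (Es i) u v else 0)
       = (if u \<in> Is j \<and> v \<in> Is j \<and> u \<noteq> v then sigma (Ks j \<union> Is j) (Es j) u v else 0)"
      by (rule sum_single) (use j uVs KI in auto)
    also have "\<dots> = sigma VV EE u v"
    proof -
      have U: "P4s VV EE u v = P4s (Vs j) (Es j) u v"
      proof -
        have E0: "P4s (Vs r) (Es r) u v = {}" if "r \<in> {1..n}" "r \<noteq> j" for r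
          using uVs[OF that] by (auto simp: P4s_def)
        show ?thesis unfolding P4e
        proof
          show "(\<Union>r\<in>{1..n}. P4s (Vs r) (Es r) u v) \<subseteq> P4s (Vs j) (Es j) u v"
            using E0 by blast
          show "P4s (Vs j) (Es j) u v \<subseteq> (\<Union>r\<in>{1..n}. P4s (Vs r) (Es r) u v)"
            using j(1) by blast
        qed
      qed
      show ?thesis
      proof (cases "v \<in> Is j")
        case True
        then show ?thesis using U j KI[OF j(1)] uv by (simp add: sigma_P4s)
      next
        case False
        have "v \<notin> Vs j"
        proof
          assume vj: "v \<in> Vs j"
          obtain j' where j': "j' \<in> {1..n}" "v \<in> Is j'" using uv unfolding I_def by blast
          then have "j' = j" using dj[OF j'(1) j(1)] vj KI by blast
          then show False using j' False by simp
        qed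
        then have "P4s (Vs j) (Es j) u v = {}" by (auto simp: P4s_def)
        then show ?thesis using U False by (simp add: sigma_P4s)
      qed
    qed
    finally show ?thesis using True by simp
  next
    case False
    have "(\<Sum>i\<in>{1..n}. if u \<in> Is i \<and> v \<in> Is i \<and> u \<noteq> v then sigma (Ks i \<union> Is i) (Es i) u v else 0) = 0"
      by (rule sum.neutral) (use False in \<open>auto simp: I_def\<close>)
    then show ?thesis using False by auto
  qed
  show "factor_graph (\<Union>i\<in>{1..n}. Ks i) (\<Union>i\<in>{1..n}. Is i) (snd (comp_up Vs Es Ks 1 n))
                = (\<Union>i\<in>{1..n}. Is i,
                   \<lambda>u v. \<Sum>i\<in>{1..n}. snd (factor_graph (Ks i) (Is i) (Es i)) u v)"
  proof -
    have KIu': "(\<Union>i\<in>{1..n}. Ks i) \<union> I = VV" using KIu I_def by simp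
    show ?thesis unfolding factor_graph_def EE_def[symmetric] I_def[symmetric] KIu' using key by simp
  qed
qed



locale sg =
  fixes V :: "'a set" and E K I
  assumes sp: "split_graph V E K I"
begin

definition nbr where "nbr w = {k \<in> K. {w, k} \<in> E}"
definition "R = {(x, y). x \<in> I \<and> y \<in> I \<and> snd (factor_graph K I E) x y \<ge> 1}"

lemma gr: "graph V E" using sp unfolding split_graph_def by blast
lemma VKI: "V = K \<union> I" "K \<inter> I = {}" using sp by (auto simp: split_graph_def)
lemma finV: "finite V" using gr by (simp add: graph_def)
lemma clique: "x \<in> K \<Longrightarrow> y \<in> K \<Longrightarrow> x \<noteq> y \<Longrightarrow> {x, y} \<in> E" using sp by (simp add: split_graph_def)
lemma indep: "x \<in> I \<Longrightarrow> y \<in> I \<Longrightarrow> {x, y} \<notin> E" using sp by (simp add: split_graph_def)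

lemma R_iff: "(x, y) \<in> R \<longleftrightarrow> x \<in> I \<and> y \<in> I \<and> x \<noteq> y \<and> sigma V E x y \<ge> 1"
  by (auto simp: R_def factor_graph_def VKI(1))

lemma R_sym: "sym R"
proof -
  have "P4s V E x y = P4s V E y x" for x y by (auto simp: P4s_def)
  then have "sigma V E x y = sigma V E y x" for x y by (simp add: sigma_P4s)
  then show ?thesis unfolding sym_def R_iff by auto
qed

lemma incomp_sigma:
  assumes x: "x \<in> I" and y: "y \<in> I" and xy: "x \<noteq> y"
    and n1: "\<not> nbr x \<subseteq> nbr y" and n2: "\<not> nbr y \<subseteq> nbr x"
  shows "sigma V E x y \<ge> 1"
proof -
  obtain k1 where k1: "k1 \<in> K" "{x, k1} \<in> E" "{y, k1} \<notin> E" using n1 unfolding nbr_def by blast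
  obtain k2 where k2: "k2 \<in> K" "{y, k2} \<in> E" "{x, k2} \<notin> E" using n2 unfolding nbr_def by blast
  have k12: "k1 \<noteq> k2" using k1 k2 by auto
  have dx: "x \<notin> K" "y \<notin> K" using x y VKI by auto
  define W where "W = {x, k1, k2, y}"
  have dist: "distinct [x, k1, k2, y]" using dx k1 k2 k12 xy by auto
  have e1: "{k1, k2} \<in> E" using clique k1 k2 k12 by blast
  have ne: "{x, y} \<notin> E" using indep x y by blast
  have r: "{e \<in> E. e \<subseteq> W} = {{x, k1}, {k1, k2}, {k2, y}}"
  proof
    show "{e \<in> E. e \<subseteq> W} \<subseteq> {{x, k1}, {k1, k2}, {k2, y}}"
    proof
      fix e assume e: "e \<in> {e \<in> E. e \<subseteq> W}"
      then obtain p q where pq: "e = {p, q}" "p \<noteq> q" using graph_edge[OF gr] by blast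
      have pW: "p \<in> W" "q \<in> W" using e pq by auto
      have eE: "{p, q} \<in> E" using e pq by auto
      show "e \<in> {{x, k1}, {k1, k2}, {k2, y}}"
        using pW eE pq k1 k2 ne unfolding W_def by (auto simp: insert_commute)
    qed
    show "{{x, k1}, {k1, k2}, {k2, y}} \<subseteq> {e \<in> E. e \<subseteq> W}"
      using k1 k2 e1 unfolding W_def by (auto simp: insert_commute)
  qed
  have ind: "induces_P4 E W" unfolding induces_P4_def using dist r W_def by blast
  have WV: "W \<subseteq> V" using x y k1 k2 VKI unfolding W_def by auto
  have "W \<in> P4s V E x y" using ind WV unfolding P4s_def W_def by auto
  moreover have "finite (P4s V E x y)"
    by (rule finite_subset[of _ "Pow V"]) (auto simp: P4s_def finV)
  ultimately have "card (P4s V E x y) > 0" by (auto simp: card_gt_0_iff)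
  then show ?thesis by (simp add: sigma_P4s)
qed

lemma sigma_incomp:
  assumes x: "x \<in> I" and y: "y \<in> I" and xy: "x \<noteq> y" and s: "sigma V E x y \<ge> 1"
  shows "\<not> nbr x \<subseteq> nbr y \<and> \<not> nbr y \<subseteq> nbr x"
proof -
  have "P4s V E x y \<noteq> {}" using s by (auto simp: sigma_P4s)
  then obtain W where W: "W \<subseteq> V" "x \<in> W" "y \<in> W" "induces_P4 E W" unfolding P4s_def by blast
  obtain a b c d where d: "distinct [a, b, c, d]" "W = {a, b, c, d}"
    and r: "{e \<in> E. e \<subseteq> W} = {{a, b}, {b, c}, {c, d}}"
    using W(4) unfolding induces_P4_def by blast
  have "{a, b} \<in> {e \<in> E. e \<subseteq> W}" "{b, c} \<in> {e \<in> E. e \<subseteq> W}" "{c, d} \<in> {e \<in> E. e \<subseteq> W}"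
    unfolding r by simp_all
  then have E1: "{a, b} \<in> E" "{b, c} \<in> E" "{c, d} \<in> E" by simp_all
  have n: "{a, c} \<notin> {{a, b}, {b, c}, {c, d}}" "{b, d} \<notin> {{a, b}, {b, c}, {c, d}}"
    "{a, d} \<notin> {{a, b}, {b, c}, {c, d}}"
    using d(1) by (auto simp add: doubleton_eq_iff)
  have "{a, c} \<subseteq> W" "{b, d} \<subseteq> W" "{a, d} \<subseteq> W" using d(2) by auto
  then have E2: "{a, c} \<notin> E" "{b, d} \<notin> E" "{a, d} \<notin> E" using n unfolding r[symmetric] by simp_all
  have inV: "a \<in> V" "b \<in> V" "c \<in> V" "d \<in> V" using W(1) d(2) by auto
  have bK: "b \<in> K"
  proof (rule ccontr)
    assume "b \<notin> K"
    then have "b \<in> I" using inV VKI by auto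
    then have "a \<in> K" "c \<in> K" using E1 indep inV VKI by (auto simp: insert_commute)
    then show False using clique E2 d(1) by auto
  qed
  have cK: "c \<in> K"
  proof (rule ccontr)
    assume "c \<notin> K"
    then have "c \<in> I" using inV VKI by auto
    then have "b \<in> K" "d \<in> K" using E1 indep inV VKI by (auto simp: insert_commute)
    then show False using clique E2 d(1) by auto
  qed
  have aI: "a \<in> I" using clique[of a c] cK E2 d(1) inV VKI by auto
  have dI: "d \<in> I" using clique[of b d] bK E2 d(1) inV VKI by auto
  have "x \<in> {a, d}" "y \<in> {a, d}" using W d(2) x y bK cK VKI by auto
  then have xy2: "(x = a \<and> y = d) \<or> (x = d \<and> y = a)" using xy by auto
  have "b \<in> nbr a" "b \<notin> nbr d" "c \<in> nbr d" "c \<notin> nbr a"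
    using E1 E2 bK cK unfolding nbr_def by (auto simp: insert_commute)
  then show ?thesis using xy2 by auto
qed

lemma comparable:
  "x \<in> I \<Longrightarrow> y \<in> I \<Longrightarrow> (x, y) \<notin> R \<Longrightarrow> nbr x \<subseteq> nbr y \<or> nbr y \<subseteq> nbr x"
  using incomp_sigma R_iff by fastforce

lemma R_incomp: "(x, y) \<in> R \<Longrightarrow> \<not> nbr x \<subseteq> nbr y \<and> \<not> nbr y \<subseteq> nbr x"
  using sigma_incomp R_iff by blast

lemma nbr_ne: "active V E \<Longrightarrow> w \<in> I \<Longrightarrow> nbr w \<noteq> {}"
proof -
  assume act: "active V E" and w: "w \<in> I"
  then have "w \<in> V" using VKI by auto
  then obtain a b c d where s: "two_switch V E a b c d" "w \<in> {a, b, c, d}"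
    using act unfolding active_def active_vertex_def by blast
  have "\<exists>y. y \<in> V \<and> {w, y} \<in> E" using s unfolding two_switch_def by (auto simp: insert_commute)
  then obtain y where y: "y \<in> V" "{w, y} \<in> E" by blast
  then have "y \<in> K" using indep w VKI by auto
  then show ?thesis using y unfolding nbr_def by auto
qed

lemma R_I: "(x, y) \<in> R \<Longrightarrow> x \<in> I \<and> y \<in> I" by (simp add: R_iff)

lemma dec:
  assumes act: "active V E" and u0: "u0 \<in> I" and v0: "v0 \<in> I"
    and nr: "(u0, v0) \<notin> R\<^sup>*" and sub: "nbr u0 \<subseteq> nbr v0"
  shows "decomposable V E"
proof -
  define C where "C = {u. (u0, u) \<in> R\<^sup>*}"
  have CI: "C \<subseteq> I"
  proof
    fix u assume "u \<in> C"
    then have "(u0, u) \<in> R\<^sup>*" by (simp add: C_def)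
    then show "u \<in> I" using u0 by (cases rule: rtrancl.cases) (auto dest: R_I)
  qed
  have u0C: "u0 \<in> C" by (simp add: C_def)
  have nprop: "nbr u \<subseteq> nbr v0" if "u \<in> C" for u
  proof -
    have "(u0, u) \<in> R\<^sup>*" using that by (simp add: C_def)
    then show ?thesis
    proof (induction rule: rtrancl_induct)
      case base then show ?case using sub .
    next
      case (step y z)
      have zI: "z \<in> I" using step(2) R_I by blast
      have "(z, v0) \<notin> R"
      proof
        assume "(z, v0) \<in> R"
        then have "(u0, v0) \<in> R\<^sup>*" using step(1,2) by (meson rtrancl.rtrancl_into_rtrancl)
        then show False using nr by simp
      qed
      then have "nbr z \<subseteq> nbr v0 \<or> nbr v0 \<subseteq> nbr z" using comparable zI v0 by blast
      moreover have "\<not> nbr y \<subseteq> nbr z" using R_incomp[OF step(2)] by blast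
      ultimately show ?case using step(3) by blast
    qed
  qed
  define K1 where "K1 = (\<Union>u\<in>C. nbr u)"
  define K2 where "K2 = K - K1"
  define I2 where "I2 = {v \<in> I. K1 \<subseteq> nbr v}"
  define I1 where "I1 = I - I2"
  define VS where "VS = K1 \<union> I1"
  define VH where "VH = K2 \<union> I2"
  define ES where "ES = {e \<in> E. e \<subseteq> VS}"
  define EH where "EH = {e \<in> E. e \<subseteq> VH}"
  have K1K: "K1 \<subseteq> K" unfolding K1_def nbr_def by auto
  have key: "nbr w \<subseteq> K1" if w: "w \<in> I1" for w
  proof (cases "w \<in> C")
    case True then show ?thesis unfolding K1_def by auto
  next
    case False
    have "\<not> K1 \<subseteq> nbr w" "w \<in> I" using w unfolding I1_def I2_def by auto
    then obtain u where u: "u \<in> C" "\<not> nbr u \<subseteq> nbr w" unfolding K1_def by blast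
    have "(u, w) \<notin> R"
    proof
      assume "(u, w) \<in> R"
      moreover have "(u0, u) \<in> R\<^sup>*" using u(1) unfolding C_def by simp
      ultimately have "(u0, w) \<in> R\<^sup>*" by (rule rtrancl.rtrancl_into_rtrancl[rotated])
      then have "w \<in> C" unfolding C_def by simp
      then show False using False by simp
    qed
    then have "nbr w \<subseteq> nbr u" using comparable[of u w] u CI \<open>w \<in> I\<close> by blast
    then show ?thesis using u(1) unfolding K1_def by blast
  qed
  have VSV: "VS \<subseteq> V" "VH \<subseteq> V" using K1K VKI unfolding VS_def VH_def K2_def I1_def I2_def by auto
  have gS: "graph VS ES"
    unfolding graph_def
  proof
    show "finite VS" using finite_subset[OF VSV(1) finV] .
    show "ES \<subseteq> {{x, y} |x y. x \<in> VS \<and> y \<in> VS \<and> x \<noteq> y}"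
    proof
      fix e assume e: "e \<in> ES"
      then obtain p q where "e = {p, q}" "p \<noteq> q" using graph_edge[OF gr] unfolding ES_def by blast
      then show "e \<in> {{x, y} |x y. x \<in> VS \<and> y \<in> VS \<and> x \<noteq> y}" using e unfolding ES_def by blast
    qed
  qed
  have gH: "graph VH EH"
    unfolding graph_def
  proof
    show "finite VH" using finite_subset[OF VSV(2) finV] .
    show "EH \<subseteq> {{x, y} |x y. x \<in> VH \<and> y \<in> VH \<and> x \<noteq> y}"
    proof
      fix e assume e: "e \<in> EH"
      then obtain p q where "e = {p, q}" "p \<noteq> q" using graph_edge[OF gr] unfolding EH_def by blast
      then show "e \<in> {{x, y} |x y. x \<in> VH \<and> y \<in> VH \<and> x \<noteq> y}" using e unfolding EH_def by blast
    qed
  qed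
  have spS: "split_graph VS ES K1 I1"
    unfolding split_graph_def
  proof (intro conjI)
    show "graph VS ES" by (rule gS)
    show "K1 \<inter> I1 = {}" using K1K VKI unfolding I1_def by auto
    show "VS = K1 \<union> I1" by (simp add: VS_def)
    show "\<forall>x\<in>K1. \<forall>y\<in>K1. x \<noteq> y \<longrightarrow> {x, y} \<in> ES"
      using clique K1K unfolding ES_def VS_def by blast
    show "\<forall>x\<in>I1. \<forall>y\<in>I1. {x, y} \<notin> ES"
      using indep unfolding ES_def I1_def by blast
  qed
  have neS: "VS \<noteq> {}"
  proof -
    have "nbr u0 \<noteq> {}" using nbr_ne[OF act u0] .
    moreover have "nbr u0 \<subseteq> VS" using u0C unfolding VS_def K1_def by blast
    ultimately show ?thesis by blast
  qed
  have neH: "VH \<noteq> {}"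
  proof -
    have "K1 \<subseteq> nbr v0" using nprop unfolding K1_def by blast
    then have "v0 \<in> VH" using v0 unfolding VH_def I2_def by blast
    then show ?thesis by blast
  qed
  have dj: "VS \<inter> VH = {}" using K1K VKI unfolding VS_def VH_def K2_def I1_def I2_def by auto
  have Veq: "V = VS \<union> VH" using K1K VKI unfolding VS_def VH_def K2_def I1_def I2_def by auto
  have cr: "p \<in> K1" if "p \<in> VS" "q \<in> VH" "{p, q} \<in> E" for p q
  proof (rule ccontr)
    assume "p \<notin> K1"
    then have pI: "p \<in> I1" using that(1) unfolding VS_def by blast
    have "q \<notin> I" using indep[of p q] that(3) pI unfolding I1_def by blast
    then have "q \<in> K2" using that(2) unfolding VH_def I2_def by blast
    then have "q \<in> nbr p" using that(3) unfolding nbr_def K2_def by blast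
    then have "q \<in> K1" using key[OF pI] by blast
    then show False using \<open>q \<in> K2\<close> unfolding K2_def by blast
  qed
  have Eeq: "E = ES \<union> EH \<union> {{x, y} | x y. x \<in> K1 \<and> y \<in> VH}"
  proof
    show "E \<subseteq> ES \<union> EH \<union> {{x, y} | x y. x \<in> K1 \<and> y \<in> VH}"
    proof
      fix e assume e: "e \<in> E"
      then obtain p q where pq: "e = {p, q}" "p \<in> V" "q \<in> V" using graph_edge[OF gr] by blast
      consider "p \<in> VS" "q \<in> VS" | "p \<in> VH" "q \<in> VH" | "p \<in> VS" "q \<in> VH" | "p \<in> VH" "q \<in> VS"
        using pq Veq by blast
      then show "e \<in> ES \<union> EH \<union> {{x, y} | x y. x \<in> K1 \<and> y \<in> VH}"
      proof cases
        case 1 then show ?thesis using e pq unfolding ES_def by blast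
      next
        case 2 then show ?thesis using e pq unfolding EH_def by blast
      next
        case 3 then have "p \<in> K1" using cr e pq by blast
        then show ?thesis using 3 pq by blast
      next
        case 4 then have "q \<in> K1" using cr[of q p] e pq by (simp add: insert_commute)
        then have "e = {q, p}" "q \<in> K1" "p \<in> VH" using 4 pq by (auto simp: insert_commute)
        then show ?thesis by blast
      qed
    qed
    show "ES \<union> EH \<union> {{x, y} | x y. x \<in> K1 \<and> y \<in> VH} \<subseteq> E"
    proof -
      have "{x, y} \<in> E" if "x \<in> K1" "y \<in> VH" for x y
      proof (cases "y \<in> K2")
        case True
        then show ?thesis using clique[of x y] that K1K unfolding K2_def by blast
      next
        case False
        then have "y \<in> I2" using that unfolding VH_def by blast
        then have "x \<in> nbr y" using that unfolding I2_def by blast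
        then show ?thesis unfolding nbr_def by (simp add: insert_commute)
      qed
      then show ?thesis unfolding ES_def EH_def by blast
    qed
  qed
  have "(V, E) = compose VS ES K1 (VH, EH)" using Veq Eeq by (simp add: compose_def)
  then show ?thesis unfolding decomposable_def
    by (intro exI[of _ VS] exI[of _ ES] exI[of _ K1] exI[of _ I1] exI[of _ VH] exI[of _ EH])
      (use spS gH neS neH dj in simp)
qed

lemma conn_iff: "mg_connected (factor_graph K I E) \<longleftrightarrow> (\<forall>u\<in>I. \<forall>v\<in>I. (u, v) \<in> R\<^sup>*)"
proof -
  have "{(x, y). x \<in> fst (factor_graph K I E) \<and> y \<in> fst (factor_graph K I E)
      \<and> snd (factor_graph K I E) x y \<ge> 1} = R"
    unfolding R_def by (simp add: factor_graph_def)
  then show ?thesis unfolding mg_connected_def by (simp add: factor_graph_def)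
qed

lemma switch_I: "two_switch V E a b c d \<Longrightarrow> a \<in> I \<or> c \<in> I"
  using clique[of a c] VKI unfolding two_switch_def by auto

theorem main1:
  assumes act: "active V E"
  shows "prime_graph V E \<longleftrightarrow> mg_connected (factor_graph K I E)"
proof
  assume pr: "prime_graph V E"
  show "mg_connected (factor_graph K I E)" unfolding conn_iff
  proof (rule ccontr)
    assume "\<not> (\<forall>u\<in>I. \<forall>v\<in>I. (u, v) \<in> R\<^sup>*)"
    then obtain u0 v0 where uv: "u0 \<in> I" "v0 \<in> I" "(u0, v0) \<notin> R\<^sup>*" by blast
    then have "(u0, v0) \<notin> R" by blast
    then have "nbr u0 \<subseteq> nbr v0 \<or> nbr v0 \<subseteq> nbr u0" using comparable uv by blast
    moreover have "(v0, u0) \<notin> R\<^sup>*"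
      using uv(3) sym_rtrancl[OF R_sym] unfolding sym_def by blast
    ultimately have "decomposable V E" using dec[OF act] uv by blast
    then show False using pr unfolding prime_graph_def by blast
  qed
next
  assume conn: "mg_connected (factor_graph K I E)"
  have "\<not> decomposable V E"
  proof
    assume "decomposable V E"
    then obtain VS ES K' I' VH EH where d: "split_graph VS ES K' I'" "graph VH EH"
      "VS \<noteq> {}" "VH \<noteq> {}" "VS \<inter> VH = {}" "(V, E) = compose VS ES K' (VH, EH)"
      unfolding decomposable_def by blast
    interpret cs: comp_setting VS ES K' I' VH EH using d by unfold_locales
    have VV: "V = cs.V" "E = cs.E" using d(6) unfolding cs.V_def cs.E_def by (metis fst_conv, metis snd_conv)
    have VU: "V = VS \<union> VH" using VV cs.V_eq by simp
    have exI: "\<exists>x\<in>I. x \<in> X" if X: "X = VS \<or> X = VH" "X \<noteq> {}" for X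
    proof -
      obtain z where z: "z \<in> X" using X by blast
      then have "z \<in> V" using X VU by blast
      then obtain a b c d where s: "two_switch V E a b c d" "z \<in> {a, b, c, d}"
        using act unfolding active_def active_vertex_def by blast
      have "two_switch VS ES a b c d \<or> two_switch VH EH a b c d" using cs.switch_iff s(1) VV by simp
      then have "a \<in> X \<and> c \<in> X"
      proof
        assume sw: "two_switch VS ES a b c d"
        then have "z \<in> VS" using s(2) unfolding two_switch_def by blast
        then have "X = VS" using X z d(5) by blast
        then show ?thesis using sw unfolding two_switch_def by blast
      next
        assume sw: "two_switch VH EH a b c d"
        then have "z \<in> VH" using s(2) unfolding two_switch_def by blast
        then have "X = VH" using X z d(5) by blast
        then show ?thesis using sw unfolding two_switch_def by blast
      qed
      then show ?thesis using switch_I[OF s(1)] by blast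
    qed
    obtain x where x: "x \<in> I" "x \<in> VS" using exI[of VS] d(3) by blast
    obtain y where y: "y \<in> I" "y \<in> VH" using exI[of VH] d(4) by blast
    have "(x, y) \<in> R\<^sup>*" using conn x y unfolding conn_iff by blast
    then have "y \<in> VS"
    proof (induction rule: rtrancl_induct)
      case base then show ?case using x by simp
    next
      case (step w z)
      have "sigma V E w z \<ge> 1" using step(2) R_iff by blast
      then have "P4s V E w z \<noteq> {}" by (auto simp: sigma_P4s)
      then obtain W where "W \<in> P4s VS ES w z \<union> P4s VH EH w z" using cs.P4s_iff VV by auto
      then show ?case
      proof
        assume "W \<in> P4s VS ES w z" then show ?thesis unfolding P4s_def by blast
      next
        assume "W \<in> P4s VH EH w z"
        then have "w \<in> VH" unfolding P4s_def by blast
        then show ?thesis using step(3) d(5) by blast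
      qed
    qed
    then show False using y d(5) by blast
  qed
  then show "prime_graph V E" using act unfolding prime_graph_def by blast
qed

end


theorem theorem2p7:
  shows "(\<forall>(V :: 'a set) E K I. split_graph V E K I \<and> active V E \<longrightarrow>
            (prime_graph V E \<longleftrightarrow> mg_connected (factor_graph K I E)))
       \<and> (\<forall>(n :: nat) (Vs :: nat \<Rightarrow> 'a set) Es Ks Is.
            (\<forall>i\<in>{1..n}. split_graph (Vs i) (Es i) (Ks i) (Is i) \<and> prime_graph (Vs i) (Es i))
            \<and> (\<forall>i\<in>{1..n}. \<forall>j\<in>{1..n}. i \<noteq> j \<longrightarrow> Vs i \<inter> Vs j = {})
            \<longrightarrow> factor_graph (\<Union>i\<in>{1..n}. Ks i) (\<Union>i\<in>{1..n}. Is i) (snd (comp_up Vs Es Ks 1 n))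
                = (\<Union>i\<in>{1..n}. Is i,
                   \<lambda>u v. \<Sum>i\<in>{1..n}. snd (factor_graph (Ks i) (Is i) (Es i)) u v))
       \<and> (\<forall>(V :: 'a set) E (n :: nat) Vs Es Ks Is.
            graph V E \<and> active V E \<and> n \<ge> 1
            \<and> (\<forall>r\<in>{1..n}. graph (Vs r) (Es r) \<and> Vs r \<noteq> {} \<and> \<not> decomposable (Vs r) (Es r))
            \<and> (\<forall>r\<in>{2..n}. split_graph (Vs r) (Es r) (Ks r) (Is r))
            \<and> (\<forall>r\<in>{1..n}. \<forall>s\<in>{1..n}. r \<noteq> s \<longrightarrow> Vs r \<inter> Vs s = {})
            \<and> (V, E) = comp_down Vs Es Ks n
            \<longrightarrow> (\<forall>r\<in>{1..n}. prime_graph (Vs r) (Es r)))"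
proof (intro conjI)
  show "\<forall>(V :: 'a set) E K I. split_graph V E K I \<and> active V E \<longrightarrow>
            (prime_graph V E \<longleftrightarrow> mg_connected (factor_graph K I E))"
    by (metis sg.intro sg.main1)
qed (rule part2, rule part3)

end
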